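(* For every graph $G$, $\chi_{td}(\mathrm{cl}(G)) \leq 2\chi_{td}(G)+1$.
   Context: For a simple graph $G$ and a positive integer $k$, a proper $k$-total difference labeling of $G$ is a function $f: V(G)\to\{1,\dots,k\}$, extended to edges by $f(\{u,v\}) = |f(u)-f(v)|$, such that: (i) adjacent vertices receive different labels; (ii) two distinct edges sharing a vertex receive different labels; (iii) no edge receives the same label as either of its endpoints. $\chi_{td}(G)$ denotes the smallest $k$ for which such a labeling exists. The clone $\mathrm{cl}(G)$ of $G$ is the Cartesian product $G \,\square\, K_2$: it consists of two copies $\{x_i\}$ and $\{y_i\}$ of the vertex set $\{g_i\}$ of $G$, where $x_i x_j$ and $y_i y_j$ are edges iff $g_i g_j$ is an edge of $G$, and $x_i y_j$ is an edge iff $i=j$. *)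

theory Defs
  imports Main
begin

definition simple_graph :: "'a set \<Rightarrow> ('a \<Rightarrow> 'a \<Rightarrow> bool) \<Rightarrow> bool" where
  "simple_graph V E \<longleftrightarrow> finite V \<and>
     (\<forall>u v. E u v \<longrightarrow> u \<in> V \<and> v \<in> V) \<and>
     (\<forall>u v. E u v \<longrightarrow> E v u) \<and> (\<forall>v. \<not> E v v)"

definition edge_label :: "('a \<Rightarrow> nat) \<Rightarrow> 'a \<Rightarrow> 'a \<Rightarrow> nat" where
  "edge_label f u v = (if f u \<le> f v then f v - f u else f u - f v)"

text \<open>Proper k-total difference labeling. Edges are unordered, so "two distinct
  edges sharing a vertex" means edges vu and vw with u \<noteq> w.\<close>
definition total_diff_labeling ::
  "'a set \<Rightarrow> ('a \<Rightarrow> 'a \<Rightarrow> bool) \<Rightarrow> nat \<Rightarrow> ('a \<Rightarrow> nat) \<Rightarrow> bool" where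
  "total_diff_labeling V E k f \<longleftrightarrow>
     (\<forall>v\<in>V. f v \<in> {1..k}) \<and>
     (\<forall>u v. E u v \<longrightarrow> f u \<noteq> f v) \<and>
     (\<forall>v u w. E v u \<and> E v w \<and> u \<noteq> w \<longrightarrow> edge_label f v u \<noteq> edge_label f v w) \<and>
     (\<forall>u v. E u v \<longrightarrow> edge_label f u v \<noteq> f u \<and> edge_label f u v \<noteq> f v)"

definition chi_td :: "'a set \<Rightarrow> ('a \<Rightarrow> 'a \<Rightarrow> bool) \<Rightarrow> nat" where
  "chi_td V E = (LEAST k. \<exists>f. total_diff_labeling V E k f)"

text \<open>The clone cl(G) = G \<box> K_2: vertices (v, b) with b::bool naming the copy
  (False: x-copy, True: y-copy).\<close>
definition clone_V :: "'a set \<Rightarrow> ('a \<times> bool) set" where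
  "clone_V V = V \<times> UNIV"

definition clone_E :: "'a set \<Rightarrow> ('a \<Rightarrow> 'a \<Rightarrow> bool) \<Rightarrow> ('a \<times> bool) \<Rightarrow> ('a \<times> bool) \<Rightarrow> bool" where
  "clone_E V E p q \<longleftrightarrow>
     (snd p = snd q \<and> E (fst p) (fst q)) \<or>
     (fst p = fst q \<and> fst p \<in> V \<and> snd p \<noteq> snd q)"

end

theory Submission
  imports Defs
begin

lemma el_int: "int (edge_label f u v) = \<bar>int (f u) - int (f v)\<bar>"
  unfolding edge_label_def by auto

lemma pow3_gap: "p < (q::nat) \<Longrightarrow> 3 * (3::int)^p \<le> 3^q"
proof -
  assume "p < q"
  then have "Suc p \<le> q" by simp
  then have "(3::int)^Suc p \<le> 3^q" by (rule power_increasing) simp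
  then show ?thesis by simp
qed

lemma pow3_abs:
  assumes "p \<noteq> i" "q \<noteq> i" "p \<noteq> (q::nat)"
  shows "\<bar>(3::int)^i - 3^p\<bar> \<noteq> \<bar>3^i - 3^q\<bar>"
proof -
  have pos: "(0::int) < 3^n" for n by simp
  have inj: "(3::int)^p \<noteq> 3^q" using assms(3) by simp
  consider "p < i" "q < i" | "p < i" "i < q" | "i < p" "q < i" | "i < p" "i < q"
    using assms by linarith
  then show ?thesis
  proof cases
    case 1 then show ?thesis using pow3_gap[of p i] pow3_gap[of q i] inj pos[of p] pos[of q] by auto
  next
    case 2 then show ?thesis using pow3_gap[of p i] pow3_gap[of i q] pos[of p] pos[of i] by (smt (verit))
  next
    case 3 then show ?thesis using pow3_gap[of q i] pow3_gap[of i p] pos[of q] pos[of i] by (smt (verit))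
  next
    case 4 then show ?thesis using pow3_gap[of i p] pow3_gap[of i q] inj pos[of i] by auto
  qed
qed

lemma exists_lab:
  assumes "simple_graph V E"
  shows "\<exists>k f. total_diff_labeling V E k f"
proof -
  from assms have fin: "finite V" and EV: "\<And>u v. E u v \<Longrightarrow> u \<in> V \<and> v \<in> V"
    and irr: "\<And>v. \<not> E v v" unfolding simple_graph_def by auto
  obtain idx :: "'a \<Rightarrow> nat" and n where im: "idx ` V = {i. i < n}" and inj: "inj_on idx V"
    using finite_imp_inj_to_nat_seg[OF fin] by blast
  define f where "f v = (3::nat) ^ idx v" for v
  have fi: "int (f v) = 3 ^ idx v" for v unfolding f_def by simp
  have neq: "E u v \<Longrightarrow> idx u \<noteq> idx v" for u v
    using inj EV irr unfolding inj_on_def by metis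
  have "total_diff_labeling V E (3^n) f"
    unfolding total_diff_labeling_def
  proof (intro conjI allI impI ballI)
    fix v assume "v \<in> V"
    then have "idx v < n" using im by auto
    then have "f v \<le> 3^n" unfolding f_def by (intro power_increasing) auto
    then show "f v \<in> {1..3^n}" unfolding f_def by simp
  next
    fix u v assume "E u v"
    then show "f u \<noteq> f v" using neq unfolding f_def by simp
  next
    fix v u w assume h: "E v u \<and> E v w \<and> u \<noteq> w"
    then have "idx u \<noteq> idx v" "idx w \<noteq> idx v" "idx u \<noteq> idx w"
      using neq[of v u] neq[of v w] inj EV unfolding inj_on_def by metis+
    then have "\<bar>(3::int)^idx v - 3^idx u\<bar> \<noteq> \<bar>3^idx v - 3^idx w\<bar>"
      using pow3_abs by metis
    then have "int (edge_label f v u) \<noteq> int (edge_label f v w)"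
      unfolding el_int fi by simp
    then show "edge_label f v u \<noteq> edge_label f v w" by simp
  next
    fix u v assume h: "E u v"
    have ne: "idx u \<noteq> idx v" using neq[OF h] .
    have A: "\<bar>(3::int)^idx u - 3^idx v\<bar> \<noteq> 3^idx u \<and> \<bar>(3::int)^idx u - 3^idx v\<bar> \<noteq> 3^idx v"
    proof (cases "idx u < idx v")
      case True then show ?thesis using pow3_gap[of "idx u" "idx v"] by auto
    next
      case False then have "idx v < idx u" using ne by simp
      then show ?thesis using pow3_gap[of "idx v" "idx u"] by auto
    qed
    have "int (edge_label f u v) \<noteq> int (f u)" "int (edge_label f u v) \<noteq> int (f v)"
      using A unfolding el_int fi by auto
    then show "edge_label f u v \<noteq> f u" "edge_label f u v \<noteq> f v" by auto
  qed
  then show ?thesis by blast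
qed

theorem mainTheorem8:
  fixes V :: "'a set" and E :: "'a \<Rightarrow> 'a \<Rightarrow> bool"
  assumes "simple_graph V E"
  shows "chi_td (clone_V V) (clone_E V E) \<le> 2 * chi_td V E + 1"
proof -
  define k where "k = chi_td V E"
  have "\<exists>f. total_diff_labeling V E k f"
    unfolding k_def chi_td_def by (rule LeastI_ex) (use exists_lab[OF assms] in blast)
  then obtain f where f: "total_diff_labeling V E k f" by blast
  from assms have EV: "\<And>u v. E u v \<Longrightarrow> u \<in> V \<and> v \<in> V"
    unfolding simple_graph_def by auto
  from f have fr: "\<And>v. v \<in> V \<Longrightarrow> 1 \<le> f v \<and> f v \<le> k"
    and fp: "\<And>u v. E u v \<Longrightarrow> f u \<noteq> f v"
    and fe: "\<And>v u w. E v u \<Longrightarrow> E v w \<Longrightarrow> u \<noteq> w \<Longrightarrow> edge_label f v u \<noteq> edge_label f v w"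
    and fl: "\<And>u v. E u v \<Longrightarrow> edge_label f u v \<noteq> f u \<and> edge_label f u v \<noteq> f v"
    unfolding total_diff_labeling_def by auto
  define g where "g p = (if snd p then f (fst p) + k + 1 else f (fst p))" for p
  have gi: "int (g p) = int (f (fst p)) + (if snd p then int k + 1 else 0)" for p
    unfolding g_def by auto
  have elg_same: "snd p = snd q \<Longrightarrow> edge_label g p q = edge_label f (fst p) (fst q)" for p q
    unfolding edge_label_def g_def by auto
  have elg_vert: "fst p = fst q \<Longrightarrow> snd p \<noteq> snd q \<Longrightarrow> edge_label g p q = k + 1" for p q
    unfolding edge_label_def g_def by auto
  have small: "E u v \<Longrightarrow> edge_label f u v < k" for u v
    using fr[of u] fr[of v] EV[of u v] unfolding edge_label_def by auto
  have "total_diff_labeling (clone_V V) (clone_E V E) (2 * k + 1) g"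
    unfolding total_diff_labeling_def
  proof (intro conjI allI impI ballI)
    fix p assume "p \<in> clone_V V"
    then have "fst p \<in> V" unfolding clone_V_def by auto
    then show "g p \<in> {1..2 * k + 1}" using fr[of "fst p"] unfolding g_def by auto
  next
    fix p q assume "clone_E V E p q"
    then show "g p \<noteq> g q" unfolding clone_E_def g_def using fp by auto
  next
    fix p q r assume h: "clone_E V E p q \<and> clone_E V E p r \<and> q \<noteq> r"
    then have h1: "clone_E V E p q" and h2: "clone_E V E p r" and qr: "q \<noteq> r" by auto
    show "edge_label g p q \<noteq> edge_label g p r"
    proof (cases "snd p = snd q")
      case True
      then have Eq: "E (fst p) (fst q)" using h1 unfolding clone_E_def by auto
      show ?thesis
      proof (cases "snd p = snd r")
        case True
        then have Er: "E (fst p) (fst r)" using h2 unfolding clone_E_def by auto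
        have "fst q \<noteq> fst r" using qr `snd p = snd q` True by (auto simp: prod_eq_iff)
        then show ?thesis using fe[OF Eq Er] elg_same `snd p = snd q` True by simp
      next
        case False
        then have "fst p = fst r" using h2 unfolding clone_E_def by auto
        then show ?thesis using elg_vert[of p r] False elg_same[OF True] small[OF Eq] by simp
      qed
    next
      case False
      then have fq: "fst p = fst q" using h1 unfolding clone_E_def by auto
      show ?thesis
      proof (cases "snd p = snd r")
        case True
        then have Er: "E (fst p) (fst r)" using h2 unfolding clone_E_def by auto
        then show ?thesis using elg_vert[OF fq False] elg_same[OF True] small[OF Er] by simp
      next
        case False
        then have "fst p = fst r" using h2 unfolding clone_E_def by auto
        then have "q = r" using fq False `snd p \<noteq> snd q` by (auto simp: prod_eq_iff)
        then show ?thesis using qr by simp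
      qed
    qed
  next
    fix p q assume h: "clone_E V E p q"
    have A: "edge_label g p q \<noteq> g p \<and> edge_label g p q \<noteq> g q"
    proof (cases "snd p = snd q")
      case True
      then have Eq: "E (fst p) (fst q)" using h unfolding clone_E_def by auto
      then show ?thesis using elg_same[OF True] fl[OF Eq] small[OF Eq] True
        unfolding g_def by auto
    next
      case False
      then have "fst p = fst q" "fst p \<in> V" using h unfolding clone_E_def by auto
      then show ?thesis using elg_vert[of p q] False fr[of "fst p"] unfolding g_def by auto
    qed
    then show "edge_label g p q \<noteq> g p" by simp
    from A show "edge_label g p q \<noteq> g q" by simp
  qed
  then have "chi_td (clone_V V) (clone_E V E) \<le> 2 * k + 1"
    unfolding chi_td_def by (intro Least_le) blast
  then show ?thesis unfolding k_def .
qed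

end
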